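(* Let $G=(V,E)$ be a finite undirected graph with $V=\{1,\dots,n\}$ and let $H=(V,E')$ be a subgraph of $G$ with the same vertex set, i.e. $E'\subseteq E$. Then $A_H$ is positive definite for every $A\in\mathbb{P}_G$ if and only if $H=G_1\cup\dots\cup G_k$, where $G_1,\dots,G_k$ are induced subgraphs of $G$ that are pairwise disconnected in $H$ (i.e. the vertex sets of the $G_i$ partition $V$, each $G_i$ is the subgraph of $G$ induced by its vertex set, and $H$ has no edge between distinct $G_i$).
   Context: For a symmetric $n\times n$ real matrix $A=(a_{ij})$ and an undirected graph $K=(V,F)$ on $V=\{1,\dots,n\}$, the thresholded matrix $A_K$ is defined by $(A_K)_{ij}=a_{ij}$ if $i=j$ or $(i,j)\in F$, and $(A_K)_{ij}=0$ otherwise. $\mathbb{P}_G$ denotes the set of symmetric positive definite $n\times n$ real matrices $A$ with $a_{ij}=0$ whenever $i\neq j$ and $(i,j)\notin E$. *)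

theory Defs
  imports "HOL-Analysis.Analysis" "HOL-Library.Disjoint_Sets"
begin

text \<open>Vertices are the elements of a finite type 'n (playing the role of {1..n});
  an undirected graph is given by a symmetric irreflexive edge set.\<close>

definition pos_def_mat :: "real^'n^'n \<Rightarrow> bool" where
  "pos_def_mat A \<longleftrightarrow> transpose A = A \<and> (\<forall>x. x \<noteq> 0 \<longrightarrow> x \<bullet> (A *v x) > 0)"

definition thresholded :: "('n \<times> 'n) set \<Rightarrow> real^'n^'n \<Rightarrow> real^'n^'n" where
  "thresholded K A = (\<chi> i j. if i = j \<or> (i, j) \<in> K then A $ i $ j else 0)"

definition PG :: "('n \<times> 'n) set \<Rightarrow> (real^'n^'n) set" where
  "PG E = {A. pos_def_mat A \<and> (\<forall>i j. i \<noteq> j \<and> (i, j) \<notin> E \<longrightarrow> A $ i $ j = 0)}"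

end

theory Submission
  imports Defs
begin

lemma qf: "x \<bullet> (M *v x) = (\<Sum>u\<in>UNIV. \<Sum>v\<in>UNIV. x$u * M$u$v * x$v)"
  by (simp add: inner_vec_def matrix_vector_mult_def sum_distrib_left mult.assoc)

lemma pd_nonneg: "pos_def_mat A \<Longrightarrow> 0 \<le> y \<bullet> (A *v y)"
  unfolding pos_def_mat_def by (cases "y = 0") (auto intro: less_imp_le)

lemma dir2:
  fixes E E' :: "('n::finite \<times> 'n) set" and P :: "'n set set"
  assumes "sym E'" and part: "partition_on (UNIV :: 'n set) P"
    and iff: "\<forall>i j. (i, j) \<in> E' \<longleftrightarrow> (i, j) \<in> E \<and> (\<exists>B \<in> P. i \<in> B \<and> j \<in> B)"
    and A: "A \<in> PG E"
  shows "pos_def_mat (thresholded E' A)"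
proof -
  have pdA: "pos_def_mat A" and zA: "\<And>i j. i \<noteq> j \<Longrightarrow> (i, j) \<notin> E \<Longrightarrow> A $ i $ j = 0"
    using A by (auto simp: PG_def)
  have symA: "A $ i $ j = A $ j $ i" for i j
    using pdA unfolding pos_def_mat_def by (metis transpose_def vec_lambda_beta)
  define blk where "blk u v \<longleftrightarrow> (\<exists>B \<in> P. u \<in> B \<and> v \<in> B)" for u v
  have finP: "finite P" by (rule finite_subset[of _ "UNIV"]) auto
  have cnt: "(\<Sum>B\<in>P. if u \<in> B \<and> v \<in> B then (1::real) else 0) = (if blk u v then 1 else 0)" for u v
  proof (cases "blk u v")
    case True
    then obtain B0 where B0: "B0 \<in> P" "u \<in> B0" "v \<in> B0" unfolding blk_def by auto
    have "P \<inter> {B. u \<in> B \<and> v \<in> B} = {B0}"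
      using B0 partition_onD2[OF part] unfolding disjoint_def by auto
    then show ?thesis using True finP
      by (simp add: sum.If_cases)
  next
    case False
    then show ?thesis unfolding blk_def by (simp add: sum.neutral)
  qed
  have T: "thresholded E' A $ u $ v = (if blk u v then A $ u $ v else 0)" for u v
  proof -
    have "blk u u" using partition_onD1[OF part] unfolding blk_def by auto
    then show ?thesis using iff zA[of u v] unfolding thresholded_def blk_def by auto
  qed
  define y where "y B x = (\<chi> u. if u \<in> B then x $ u else 0)" for B and x :: "real^'n"
  have key: "x \<bullet> (thresholded E' A *v x) = (\<Sum>B\<in>P. y B x \<bullet> (A *v y B x))" for x
  proof -
    have "x \<bullet> (thresholded E' A *v x) = (\<Sum>u\<in>UNIV. \<Sum>v\<in>UNIV. x$u * A$u$v * x$v * (\<Sum>B\<in>P. if u \<in> B \<and> v \<in> B then (1::real) else 0))"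
      unfolding qf T cnt by (intro sum.cong refl) auto
    also have "\<dots> = (\<Sum>u\<in>UNIV. \<Sum>v\<in>UNIV. \<Sum>B\<in>P. y B x $u * A$u$v * y B x $v)"
      unfolding sum_distrib_left by (intro sum.cong refl) (auto simp: y_def)
    also have "\<dots> = (\<Sum>u\<in>UNIV. \<Sum>B\<in>P. \<Sum>v\<in>UNIV. y B x $u * A$u$v * y B x $v)"
      by (rule sum.cong[OF refl], rule sum.swap)
    also have "\<dots> = (\<Sum>B\<in>P. \<Sum>u\<in>UNIV. \<Sum>v\<in>UNIV. y B x $u * A$u$v * y B x $v)"
      by (rule sum.swap)
    finally show ?thesis unfolding qf .
  qed
  show ?thesis unfolding pos_def_mat_def
  proof (intro conjI allI impI)
    show "transpose (thresholded E' A) = thresholded E' A"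
      using \<open>sym E'\<close> symA unfolding transpose_def thresholded_def
      by (intro vec_eq_iff[THEN iffD2] allI) (auto simp: sym_def)
  next
    fix x :: "real^'n" assume "x \<noteq> 0"
    then obtain u where u: "x $ u \<noteq> 0" by (metis vec_eq_iff zero_index)
    then obtain B where B: "B \<in> P" "u \<in> B" using partition_onD1[OF part] by auto
    have "y B x \<noteq> 0"
    proof
      assume "y B x = 0"
      then have "y B x $ u = 0" by simp
      with u B show False by (simp add: y_def)
    qed
    then have "0 < y B x \<bullet> (A *v y B x)" using pdA unfolding pos_def_mat_def by auto
    then show "0 < x \<bullet> (thresholded E' A *v x)" unfolding key
      by (intro sum_pos2[OF finP B(1)]) (auto intro: pd_nonneg[OF pdA])
  qed
qed

lemma walk_bound:
  fixes E' :: "('n::finite \<times> 'n) set"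
  defines "D2 \<equiv> \<lambda>x::real^'n. (\<Sum>u\<in>UNIV. \<Sum>v\<in>UNIV. if (u, v) \<in> E' then (x$u - x$v)^2 else 0)"
  assumes "(i, w) \<in> E'\<^sup>*"
  shows "\<exists>m::nat. \<forall>x. \<bar>x$w - x$i\<bar> \<le> real m * sqrt (D2 x)"
  using assms(2)
proof (induction rule: rtrancl_induct)
  case base
  then show ?case by (intro exI[of _ 0]) simp
next
  case (step v w)
  then obtain m where m: "\<forall>x. \<bar>x$v - x$i\<bar> \<le> real m * sqrt (D2 x)" by auto
  have one: "\<bar>x$w - x$v\<bar> \<le> sqrt (D2 x)" for x
  proof -
    have nn: "0 \<le> (if (u, v') \<in> E' then (x$u - x$v')^2 else 0)" for u v' by simp
    have "(x$v - x$w)^2 = (if (v, w) \<in> E' then (x$v - x$w)^2 else 0)" using step by simp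
    also have "\<dots> \<le> (\<Sum>v'\<in>UNIV. if (v, v') \<in> E' then (x$v - x$v')^2 else 0)"
      by (rule member_le_sum) auto
    also have "\<dots> \<le> D2 x" unfolding D2_def
      by (rule member_le_sum[where f="\<lambda>u. \<Sum>v'\<in>UNIV. if (u, v') \<in> E' then (x$u - x$v')^2 else 0"])
         (auto intro: sum_nonneg)
    finally have "\<bar>x$w - x$v\<bar>^2 \<le> D2 x" by (simp add: power2_commute)
    then show ?thesis by (rule real_le_rsqrt)
  qed
  have "\<forall>x. \<bar>x$w - x$i\<bar> \<le> real (Suc m) * sqrt (D2 x)"
  proof
    fix x :: "real^'n"
    have "\<bar>x$w - x$i\<bar> \<le> \<bar>x$w - x$v\<bar> + \<bar>x$v - x$i\<bar>" by linarith
    also have "\<dots> \<le> sqrt (D2 x) + real m * sqrt (D2 x)" using m one[of x]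
      by (intro add_mono) auto
    finally show "\<bar>x$w - x$i\<bar> \<le> real (Suc m) * sqrt (D2 x)" by (simp add: algebra_simps)
  qed
  then show ?case by blast
qed

lemma construct:
  fixes E E' :: "('n::finite \<times> 'n) set"
  assumes symE: "sym E" and irr: "irrefl E" and symE': "sym E'" and sub: "E' \<subseteq> E"
    and ijE: "(i, j) \<in> E" and ijE': "(i, j) \<notin> E'" and conn: "(i, j) \<in> E'\<^sup>*"
  shows "\<exists>A\<in>PG E. \<not> pos_def_mat (thresholded E' A)"
proof -
  define D2 where "D2 \<equiv> \<lambda>x::real^'n. (\<Sum>u\<in>UNIV. \<Sum>v\<in>UNIV. if (u, v) \<in> E' then (x$u - x$v)^2 else 0)"
  define S where "S = {v. (i, v) \<in> E'\<^sup>*}"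
  have ij: "i \<noteq> j" using ijE irr by (auto simp: irrefl_def)
  have irr': "(u, u) \<notin> E'" for u using sub irr by (auto simp: irrefl_def)
  have jiE': "(j, i) \<notin> E'" using ijE' symE' by (auto simp: sym_def)
  have jiE: "(j, i) \<in> E" using ijE symE by (auto simp: sym_def)
  have wb: "\<exists>m::nat. \<forall>x. \<bar>x$w - x$i\<bar> \<le> real m * sqrt (D2 x)" if "w \<in> S" for w
    using walk_bound[of i w E'] that unfolding S_def D2_def by auto
  obtain m :: nat where m: "\<And>x. \<bar>x$j - x$i\<bar> \<le> real m * sqrt (D2 x)"
    using wb[of j] conn unfolding S_def by auto
  define b :: real where "b = 1 / (2 * (real m + 1)^2)"
  have bpos: "b > 0" unfolding b_def by simp
  have bm: "b * (real m)^2 \<le> 1/2"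
  proof -
    have "(real m)^2 \<le> (real m + 1)^2" by (intro power_mono) auto
    then show ?thesis unfolding b_def by (simp add: field_simps)
  qed
  define deg where "deg u = (\<Sum>v\<in>UNIV. if (u, v) \<in> E' then (1::real) else 0)" for u
  define l where "l u v = (if u = v then deg u else if (u, v) \<in> E' then -1 else (0::real))" for u v
  define p where "p u v = (if u = v \<and> u \<notin> S then 1 else (0::real))" for u v
  define k where "k u v = (if u = i \<and> v = j then b else 0) + (if u = j \<and> v = i then b else 0)" for u v
  define A :: "real^'n^'n" where "A = (\<chi> u v. l u v + p u v + k u v)"
  define T :: "real^'n^'n" where "T = (\<chi> u v. l u v + p u v)"
  have TA: "thresholded E' A = T"
    unfolding thresholded_def A_def T_def
    by (intro vec_eq_iff[THEN iffD2] allI) (use ij ijE' jiE' in \<open>auto simp: k_def l_def p_def\<close>)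
  have qsplit: "x \<bullet> ((\<chi> u v. f u v + g u v) *v x) = x \<bullet> ((\<chi> u v. f u v) *v x) + x \<bullet> ((\<chi> u v. g u v) *v x)"
    for f g :: "'n \<Rightarrow> 'n \<Rightarrow> real" and x :: "real^'n"
    unfolding qf by (simp add: distrib_left distrib_right sum.distrib)
  have qL: "x \<bullet> ((\<chi> u v. l u v) *v x) = D2 x / 2" for x
  proof -
    have row: "(\<Sum>v\<in>UNIV. x$u * l u v * x$v) = (\<Sum>v\<in>UNIV. if (u, v) \<in> E' then x$u^2 - x$u * x$v else 0)" for u
    proof -
      have "(\<Sum>v\<in>UNIV. x$u * l u v * x$v) = (\<Sum>v\<in>UNIV. (if v = u then x$u * deg u * x$u else 0) + (if (u, v) \<in> E' then - (x$u * x$v) else 0))"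
        by (intro sum.cong refl) (auto simp: l_def irr')
      also have "\<dots> = x$u * deg u * x$u + (\<Sum>v\<in>UNIV. if (u, v) \<in> E' then - (x$u * x$v) else 0)"
        by (simp add: sum.distrib)
      also have "x$u * deg u * x$u = (\<Sum>v\<in>UNIV. if (u, v) \<in> E' then x$u^2 else 0)"
        unfolding deg_def by (simp add: sum_distrib_left sum_distrib_right power2_eq_square if_distrib mult.commute cong: if_cong)
      also have "(\<Sum>v\<in>UNIV. if (u, v) \<in> E' then x$u^2 else 0) + (\<Sum>v\<in>UNIV. if (u, v) \<in> E' then - (x$u * x$v) else 0)
          = (\<Sum>v\<in>UNIV. (if (u, v) \<in> E' then x$u^2 else 0) + (if (u, v) \<in> E' then - (x$u * x$v) else 0))"
        by (rule sum.distrib[symmetric])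
      also have "\<dots> = (\<Sum>v\<in>UNIV. if (u, v) \<in> E' then x$u^2 - x$u * x$v else 0)"
        by (intro sum.cong refl) auto
      finally show ?thesis .
    qed
    have swp: "(\<Sum>u\<in>UNIV. \<Sum>v\<in>UNIV. if (u, v) \<in> E' then x$v^2 else (0::real)) = (\<Sum>u\<in>UNIV. \<Sum>v\<in>UNIV. if (u, v) \<in> E' then x$u^2 else 0)"
    proof -
      have "(\<Sum>u\<in>UNIV. \<Sum>v\<in>UNIV. if (u, v) \<in> E' then x$v^2 else (0::real)) = (\<Sum>v\<in>UNIV. \<Sum>u\<in>UNIV. if (u, v) \<in> E' then x$v^2 else (0::real))"
        by (rule sum.swap)
      also have "\<dots> = (\<Sum>v\<in>UNIV. \<Sum>u\<in>UNIV. if (v, u) \<in> E' then x$v^2 else (0::real))"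
        using symE' by (intro sum.cong refl) (auto simp: sym_def)
      finally show ?thesis .
    qed
    define fa where "fa u v = (if (u, v) \<in> E' then x$u^2 else (0::real))" for u v
    define fb where "fb u v = (if (u, v) \<in> E' then x$v^2 else (0::real))" for u v
    define fc where "fc u v = (if (u, v) \<in> E' then x$u * x$v else (0::real))" for u v
    have "D2 x = (\<Sum>u\<in>UNIV. \<Sum>v\<in>UNIV. fa u v + fb u v - 2 * fc u v)"
      unfolding D2_def fa_def fb_def fc_def by (intro sum.cong refl) (auto simp: power2_diff)
    also have "\<dots> = (\<Sum>u\<in>UNIV. \<Sum>v\<in>UNIV. fa u v) + (\<Sum>u\<in>UNIV. \<Sum>v\<in>UNIV. fb u v) - 2 * (\<Sum>u\<in>UNIV. \<Sum>v\<in>UNIV. fc u v)"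
      by (simp only: sum.distrib sum_subtractf sum_distrib_left)
    also have "(\<Sum>u\<in>UNIV. \<Sum>v\<in>UNIV. fb u v) = (\<Sum>u\<in>UNIV. \<Sum>v\<in>UNIV. fa u v)"
      using swp unfolding fa_def fb_def .
    also have "(\<Sum>u\<in>UNIV. \<Sum>v\<in>UNIV. fa u v) + (\<Sum>u\<in>UNIV. \<Sum>v\<in>UNIV. fa u v) - 2 * (\<Sum>u\<in>UNIV. \<Sum>v\<in>UNIV. fc u v)
       = 2 * (\<Sum>u\<in>UNIV. \<Sum>v\<in>UNIV. fa u v - fc u v)"
      by (simp only: sum_subtractf) simp
    also have "\<dots> = 2 * (\<Sum>u\<in>UNIV. \<Sum>v\<in>UNIV. if (u, v) \<in> E' then x$u^2 - x$u * x$v else 0)"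
      unfolding fa_def fc_def by (intro arg_cong[where f="\<lambda>t. 2 * t"] sum.cong refl) auto
    finally show ?thesis unfolding qf using row by (simp add: vec_lambda_beta)
  qed
  have qP: "x \<bullet> ((\<chi> u v. p u v) *v x) = (\<Sum>u\<in>UNIV. if u \<in> S then 0 else x$u^2)" for x
  proof -
    have "(\<Sum>v\<in>UNIV. x$u * (if u = v \<and> u \<notin> S then 1 else 0) * x$v) = (if u \<in> S then 0 else x$u^2)" for u
    proof (cases "u \<in> S")
      case False
      have "(\<Sum>v\<in>UNIV. x$u * (if u = v \<and> u \<notin> S then 1 else 0) * x$v) = (\<Sum>v\<in>UNIV. if v = u then x$u * x$u else 0)"
        using False by (intro sum.cong refl) auto
      then show ?thesis using False by (simp add: power2_eq_square)
    qed simp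
    then show ?thesis unfolding qf p_def by simp
  qed
  have qK: "x \<bullet> ((\<chi> u v. k u v) *v x) = 2 * b * x$i * x$j" for x
  proof -
    have "(\<Sum>u\<in>UNIV. \<Sum>v\<in>UNIV. x$u * k u v * x$v) = (\<Sum>u\<in>UNIV. \<Sum>v\<in>UNIV.
       (if v = j then if u = i then b*x$i*x$j else 0 else 0) + (if v = i then if u = j then b*x$j*x$i else 0 else 0))"
      using ij by (intro sum.cong refl) (auto simp: k_def)
    also have "\<dots> = b*x$i*x$j + b*x$j*x$i" by (simp add: sum.distrib)
    finally show ?thesis unfolding qf by (simp add: algebra_simps)
  qed
  have QA: "x \<bullet> (A *v x) = D2 x / 2 + (\<Sum>u\<in>UNIV. if u \<in> S then 0 else x$u^2) + 2 * b * x$i * x$j" for x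
    unfolding A_def qsplit qL qP qK ..
  have QT: "x \<bullet> (T *v x) = D2 x / 2 + (\<Sum>u\<in>UNIV. if u \<in> S then 0 else x$u^2)" for x
    unfolding T_def qsplit qL qP ..
  have Ssym: "u \<in> S \<longleftrightarrow> v \<in> S" if "(u, v) \<in> E'" for u v
  proof -
    have "(v, u) \<in> E'" using that symE' by (auto simp: sym_def)
    then show ?thesis using that unfolding S_def by (auto intro: rtrancl.rtrancl_into_rtrancl)
  qed
  have iS: "i \<in> S" unfolding S_def by simp
  have D2nn: "0 \<le> D2 x" for x unfolding D2_def by (intro sum_nonneg) auto
  have Pnn: "0 \<le> (\<Sum>u\<in>UNIV. if u \<in> S then 0 else x$u^2)" for x :: "real^'n" by (intro sum_nonneg) auto
  have notT: "\<not> pos_def_mat T"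
  proof
    assume pd: "pos_def_mat T"
    define x :: "real^'n" where "x = (\<chi> u. if u \<in> S then 1 else 0)"
    have "x \<noteq> 0"
    proof
      assume "x = 0" then have "x $ i = 0" by simp
      then show False using iS by (simp add: x_def)
    qed
    then have "0 < x \<bullet> (T *v x)" using pd unfolding pos_def_mat_def by auto
    moreover have "D2 x = 0" unfolding D2_def
      by (intro sum.neutral ballI) (auto simp: x_def dest: Ssym)
    moreover have "(\<Sum>u\<in>UNIV. if u \<in> S then 0 else x$u^2) = 0"
      by (intro sum.neutral ballI) (auto simp: x_def)
    ultimately show False unfolding QT by simp
  qed
  have symk: "l u v + p u v + k u v = l v u + p v u + k v u" for u v
  proof -
    have "l u v = l v u" unfolding l_def using symE' by (cases "u = v") (auto dest: symD)
    moreover have "p u v = p v u" unfolding p_def by auto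
    moreover have "k u v = k v u" unfolding k_def
      by (cases "u = i"; cases "v = i"; cases "u = j"; cases "v = j") simp_all
    ultimately show ?thesis by simp
  qed
  have trA: "transpose A = A"
    unfolding transpose_def A_def using symk by (intro vec_eq_iff[THEN iffD2] allI) simp
  have offA: "A $ u $ v = 0" if uv: "u \<noteq> v" and nE: "(u, v) \<notin> E" for u v
  proof -
    have nE': "(u, v) \<notin> E'" using nE sub by auto
    have h1: "\<not> (u = i \<and> v = j)" using nE ijE by auto
    have h2: "\<not> (u = j \<and> v = i)" using nE jiE by auto
    have "p u v = 0" using uv unfolding p_def by simp
    moreover have "l u v = 0" unfolding l_def by (simp only: if_not_P[OF uv] if_not_P[OF nE'])
    moreover have "k u v = 0" unfolding k_def by (simp only: if_not_P[OF h1] if_not_P[OF h2] add_0)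
    ultimately show ?thesis unfolding A_def by simp
  qed
  have pdA: "pos_def_mat A"
    unfolding pos_def_mat_def
  proof (intro conjI allI impI trA)
    fix x :: "real^'n" assume x0: "x \<noteq> 0"
    define R where "R = (\<Sum>u\<in>UNIV. if u \<in> S then 0 else x$u^2)"
    have Rnn: "0 \<le> R" unfolding R_def by (rule Pnn)
    have mj: "(x$j - x$i)^2 \<le> (real m)^2 * D2 x"
    proof -
      have "(x$j - x$i)^2 = \<bar>x$j - x$i\<bar>^2" by simp
      also have "\<dots> \<le> (real m * sqrt (D2 x))^2" using m[of x] by (intro power_mono) auto
      also have "\<dots> = (real m)^2 * D2 x" using D2nn[of x] by (simp add: power_mult_distrib)
      finally show ?thesis .
    qed
    have "2 * b * x$i * x$j = (b/2) * (x$i + x$j)^2 - (b/2) * (x$j - x$i)^2"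
      by (simp add: power2_eq_square algebra_simps)
    moreover have "(b/2) * (x$j - x$i)^2 \<le> (b/2) * ((real m)^2 * D2 x)"
      using mj bpos by (intro mult_left_mono) auto
    moreover have "(b/2) * ((real m)^2 * D2 x) \<le> D2 x / 4"
    proof -
      have "(b * (real m)^2) * D2 x \<le> (1/2) * D2 x" using bm D2nn[of x] by (intro mult_right_mono) auto
      then show ?thesis by (simp add: algebra_simps)
    qed
    ultimately have lb: "x \<bullet> (A *v x) \<ge> D2 x / 4 + (b/2) * (x$i + x$j)^2 + R"
      unfolding QA R_def by linarith
    show "0 < x \<bullet> (A *v x)"
    proof (rule ccontr)
      assume "\<not> 0 < x \<bullet> (A *v x)"
      then have le: "D2 x / 4 + (b/2) * (x$i + x$j)^2 + R \<le> 0" using lb by linarith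
      have sq: "0 \<le> (b/2) * (x$i + x$j)^2" using bpos by simp
      have D0: "D2 x = 0" using le sq Rnn D2nn[of x] by linarith
      have R0: "R = 0" using le sq Rnn D2nn[of x] by linarith
      have s0: "(b/2) * (x$i + x$j)^2 = 0" using le sq Rnn D2nn[of x] by linarith
      then have "x$i + x$j = 0" using bpos by simp
      moreover have "x$j = x$i" using m[of x] D0 by simp
      ultimately have xi: "x$i = 0" by simp
      have "x $ w = 0" for w
      proof (cases "w \<in> S")
        case True
        then obtain mw :: nat where "\<forall>x. \<bar>x$w - x$i\<bar> \<le> real mw * sqrt (D2 x)" using wb by blast
        then show ?thesis using D0 xi by (metis abs_le_zero_iff diff_zero mult_zero_right real_sqrt_zero)
      next
        case False
        have "\<forall>u\<in>UNIV. (if u \<in> S then 0 else x$u^2) = 0"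
          using R0 unfolding R_def by (subst sum_nonneg_eq_0_iff[symmetric]) auto
        then have "(if w \<in> S then 0 else x$w^2) = 0" by blast
        then show ?thesis using False by simp
      qed
      then have "x = 0" by (simp add: vec_eq_iff)
      then show False using x0 by simp
    qed
  qed
  have "A \<in> PG E" unfolding PG_def using pdA offA by auto
  then show ?thesis using notT TA by auto
qed


theorem theorem4:
  fixes E E' :: "('n::finite \<times> 'n) set"
  assumes "sym E" and "irrefl E" and "sym E'" and "E' \<subseteq> E"
  shows "(\<forall>A \<in> PG E. pos_def_mat (thresholded E' A)) \<longleftrightarrow>
         (\<exists>P. partition_on (UNIV :: 'n set) P \<and>
              (\<forall>i j. (i, j) \<in> E' \<longleftrightarrow> (i, j) \<in> E \<and> (\<exists>B \<in> P. i \<in> B \<and> j \<in> B)))"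
proof
  assume L: "\<forall>A \<in> PG E. pos_def_mat (thresholded E' A)"
  define r where "r = E'\<^sup>*"
  have eq: "equiv UNIV r" unfolding r_def
  proof (rule equivI)
    show "E'\<^sup>* \<subseteq> UNIV \<times> UNIV" by simp
    show "refl_on UNIV (E'\<^sup>*)" by (rule refl_rtrancl)
    show "sym (E'\<^sup>*)" by (rule sym_rtrancl[OF assms(3)])
    show "trans (E'\<^sup>*)" by (rule trans_rtrancl)
  qed
  have blk: "(\<exists>B \<in> UNIV // r. i \<in> B \<and> j \<in> B) \<longleftrightarrow> (i, j) \<in> r" for i j
  proof
    assume "\<exists>B \<in> UNIV // r. i \<in> B \<and> j \<in> B"
    then show "(i, j) \<in> r" using in_quotient_imp_in_rel[OF eq] by blast
  next
    assume "(i, j) \<in> r"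
    moreover have "i \<in> r `` {i}" using equiv_class_self[OF eq] by simp
    ultimately show "\<exists>B \<in> UNIV // r. i \<in> B \<and> j \<in> B"
      by (intro bexI[of _ "r `` {i}"]) (auto intro: quotientI)
  qed
  show "\<exists>P. partition_on (UNIV :: 'n set) P \<and>
              (\<forall>i j. (i, j) \<in> E' \<longleftrightarrow> (i, j) \<in> E \<and> (\<exists>B \<in> P. i \<in> B \<and> j \<in> B))"
  proof (intro exI[of _ "UNIV // r"] conjI allI)
    show "partition_on UNIV (UNIV // r)" by (rule partition_on_quotient[OF eq])
  next
    fix i j
    show "(i, j) \<in> E' \<longleftrightarrow> (i, j) \<in> E \<and> (\<exists>B \<in> UNIV // r. i \<in> B \<and> j \<in> B)"
    proof
      assume ij: "(i, j) \<in> E'"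
      have "(i, j) \<in> E" using assms(4) ij by blast
      moreover have "(i, j) \<in> r" unfolding r_def using ij by (rule r_into_rtrancl)
      ultimately show "(i, j) \<in> E \<and> (\<exists>B \<in> UNIV // r. i \<in> B \<and> j \<in> B)"
        using blk[of i j] by blast
    next
      assume h: "(i, j) \<in> E \<and> (\<exists>B \<in> UNIV // r. i \<in> B \<and> j \<in> B)"
      show "(i, j) \<in> E'"
      proof (rule ccontr)
        assume "(i, j) \<notin> E'"
        moreover have "(i, j) \<in> E'\<^sup>*" using h blk[of i j] unfolding r_def by blast
        moreover have "(i, j) \<in> E" using h by blast
        ultimately obtain A where "A \<in> PG E" "\<not> pos_def_mat (thresholded E' A)"
          using construct[OF assms, of i j] by blast
        then show False using L by blast
      qed
    qed
  qed
next
  assume "\<exists>P. partition_on (UNIV :: 'n set) P \<and>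
              (\<forall>i j. (i, j) \<in> E' \<longleftrightarrow> (i, j) \<in> E \<and> (\<exists>B \<in> P. i \<in> B \<and> j \<in> B))"
  then obtain P where "partition_on (UNIV :: 'n set) P"
    "\<forall>i j. (i, j) \<in> E' \<longleftrightarrow> (i, j) \<in> E \<and> (\<exists>B \<in> P. i \<in> B \<and> j \<in> B)" by blast
  then show "\<forall>A \<in> PG E. pos_def_mat (thresholded E' A)"
    using dir2[OF assms(3)] by blast
qed

end
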